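(* Let $T \subseteq \mathbb{Z}_2^\omega$ be a thin set such that $T\cap X\neq\emptyset$ for every equivalence class $X$ of the relation $\sim$ on $\mathbb{Z}_2^\omega$. Then $T$ is not a Borel subset of $\mathbb{Z}_2^\omega$.
   Context: $\mathbb{Z}_2^\omega$ is the Cantor cube of infinite binary sequences indexed by $\omega=\{0,1,2,\dots\}$, with the product (Tychonoff) topology. The Hamming distance is $\mathrm{hd}(x,y)=|\{k: x(k)\ne y(k)\}|\in\omega\cup\{\omega\}$, and $x\sim y$ iff $\mathrm{hd}(x,y)$ is finite. A set $T\subseteq\mathbb{Z}_2^\omega$ is thin if for every $n\in\omega$ the map $x\mapsto x|_{\omega\setminus\{n\}}$ is injective on $T$ (equivalently, no two distinct elements of $T$ differ in exactly one coordinate). *)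

theory Defs
  imports "HOL-Analysis.Analysis"
begin

text \<open>Cantor cube: the type nat \<Rightarrow> bool (bool with its discrete topology,
  the function space with the product topology from Function_Topology).\<close>

definition hamming_equiv :: "(nat \<Rightarrow> bool) \<Rightarrow> (nat \<Rightarrow> bool) \<Rightarrow> bool" where
  "hamming_equiv x y \<longleftrightarrow> finite {k. x k \<noteq> y k}"

definition hamming_rel :: "((nat \<Rightarrow> bool) \<times> (nat \<Rightarrow> bool)) set" where
  "hamming_rel = {(x, y). hamming_equiv x y}"

definition thin :: "(nat \<Rightarrow> bool) set \<Rightarrow> bool" where
  "thin T \<longleftrightarrow> (\<forall>n. inj_on (\<lambda>x. restrict x (UNIV - {n})) T)"

end

theory Submission
  imports Defs
begin

lemma cs: "compact_space (euclidean :: (nat \<Rightarrow> bool) topology)"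
proof -
  have "compact_space (euclidean :: bool topology)"
    unfolding compact_space_def by (simp add: finite_imp_compact compactin_euclidean_iff)
  then show ?thesis
    by (metis compact_space_product_topology euclidean_product_topology)
qed

lemma hs: "Hausdorff_space (euclidean :: (nat \<Rightarrow> bool) topology)"
proof -
  have "Hausdorff_space (euclidean :: bool topology)"
    unfolding Hausdorff_space_def by (metis open_openin t2_space_class.separation_t2 disjnt_def)
  then show ?thesis
    by (metis Hausdorff_space_product_topology euclidean_product_topology)
qed

lemma baire_cantor:
  assumes "countable G" "\<And>C. C \<in> G \<Longrightarrow> closed C \<and> interior C = {}"
  shows "interior (\<Union>G :: (nat \<Rightarrow> bool) set) = {}"
proof -
  have "euclidean interior_of (\<Union>G) = {}"
    apply (rule Baire_category_alt)
    using cs hs compact_imp_locally_compact_space compact_Hausdorff_imp_regular_space apply blast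
    using assms by (auto simp: interior_of_def interior_def closed_closedin[symmetric])
  then show ?thesis by (simp add: interior_of_def interior_def) blast
qed


definition meagr :: "(nat \<Rightarrow> bool) set \<Rightarrow> bool" where
  "meagr A \<longleftrightarrow> (\<exists>C::nat \<Rightarrow> (nat \<Rightarrow> bool) set. (\<forall>i. closed (C i) \<and> interior (C i) = {}) \<and> A \<subseteq> \<Union>(range C))"

lemma meagr_subset: "meagr B \<Longrightarrow> A \<subseteq> B \<Longrightarrow> meagr A"
  unfolding meagr_def by blast

lemma meagr_Union:
  fixes A :: "nat \<Rightarrow> (nat \<Rightarrow> bool) set"
  assumes "\<And>i. meagr (A i)" shows "meagr (\<Union>(range A))"
proof -
  have "\<forall>i. \<exists>C::nat \<Rightarrow> (nat \<Rightarrow> bool) set. (\<forall>j. closed (C j) \<and> interior (C j) = {}) \<and> A i \<subseteq> \<Union>(range C)"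
  proof
    fix i show "\<exists>C::nat \<Rightarrow> (nat \<Rightarrow> bool) set. (\<forall>j. closed (C j) \<and> interior (C j) = {}) \<and> A i \<subseteq> \<Union>(range C)"
      using assms[of i] unfolding meagr_def .
  qed
  then obtain C :: "nat \<Rightarrow> nat \<Rightarrow> (nat \<Rightarrow> bool) set" where C0: "\<forall>i. (\<forall>j. closed (C i j) \<and> interior (C i j) = {}) \<and> A i \<subseteq> \<Union>(range (C i))"
    by (elim choice[THEN exE]) (rule that)
  have C1: "closed (C i j) \<and> interior (C i j) = {}" for i j using C0 by simp
  have C2: "A i \<subseteq> \<Union>(range (C i))" for i using C0 by simp
  define D where "D k = C (fst (prod_decode k)) (snd (prod_decode k))" for k
  have "\<forall>k. closed (D k) \<and> interior (D k) = {}" using C1 by (simp add: D_def)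
  moreover have "\<Union>(range A) \<subseteq> \<Union>(range D)"
  proof
    fix x assume "x \<in> \<Union>(range A)"
    then obtain i where "x \<in> A i" by blast
    then obtain j where "x \<in> C i j" using C2[of i] by blast
    then have "x \<in> D (prod_encode (i, j))" by (simp add: D_def)
    then show "x \<in> \<Union>(range D)" by blast
  qed
  ultimately show ?thesis unfolding meagr_def by blast
qed

lemma meagr_Un: "meagr A \<Longrightarrow> meagr B \<Longrightarrow> meagr (A \<union> B)"
proof -
  assume a: "meagr A" "meagr B"
  have "meagr (\<Union>(range (\<lambda>i::nat. if i = 0 then A else B)))"
    by (rule meagr_Union) (simp add: a)
  moreover have "A \<union> B \<subseteq> \<Union>(range (\<lambda>i::nat. if i = 0 then A else B))"
    by (auto intro: exI[of _ 0] exI[of _ 1])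
  ultimately show ?thesis using meagr_subset by blast
qed

lemma meagr_countable_Union:
  assumes "countable G" "\<And>A. A \<in> G \<Longrightarrow> meagr A" shows "meagr (\<Union>G)"
proof (cases "G = {}")
  case True then show ?thesis unfolding meagr_def
    by (intro exI[of _ "\<lambda>_. {}"]) auto
next
  case False
  then have "G = range (from_nat_into G)" using assms(1) by (simp add: range_from_nat_into)
  moreover have "meagr (\<Union>(range (from_nat_into G)))"
    by (rule meagr_Union) (simp add: False assms(2) from_nat_into)
  ultimately show ?thesis by simp
qed

lemma not_meagr_open:
  assumes "open U" "U \<noteq> {}" shows "\<not> meagr U"
proof
  assume "meagr U"
  then obtain C :: "nat \<Rightarrow> (nat \<Rightarrow> bool) set" where C: "\<And>i. closed (C i) \<and> interior (C i) = {}" "U \<subseteq> \<Union>(range C)"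
    unfolding meagr_def by blast
  have "interior (\<Union>(range C)) = {}"
    by (rule baire_cantor) (auto simp: C)
  moreover have "U \<subseteq> interior (\<Union>(range C))"
    using C(2) assms(1) interior_maximal by blast
  ultimately show False using assms(2) by blast
qed

lemma meagr_frontier:
  assumes "open U" shows "meagr (closure U - U)"
proof -
  have "closed (closure U - U)" using assms by (simp add: closed_Diff)
  moreover have "interior (closure U - U) = {}"
  proof (rule ccontr)
    assume "interior (closure U - U) \<noteq> {}"
    then obtain x where x: "x \<in> interior (closure U - U)" by blast
    have "open (interior (closure U - U))" by simp
    moreover have "interior (closure U - U) \<inter> U = {}" using interior_subset by blast
    ultimately have "interior (closure U - U) \<inter> closure U = {}"
      by (simp add: open_Int_closure_eq_empty)
    then show False using x interior_subset by blast
  qed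
  ultimately show ?thesis unfolding meagr_def
    by (intro exI[of _ "\<lambda>_. closure U - U"]) auto
qed

definition flip :: "nat set \<Rightarrow> (nat \<Rightarrow> bool) \<Rightarrow> (nat \<Rightarrow> bool)" where
  "flip F x = (\<lambda>k. if k \<in> F then \<not> x k else x k)"

lemma flip_flip [simp]: "flip F (flip F x) = x"
  by (simp add: flip_def)

lemma continuous_Not: "continuous_on UNIV Not"
  by (simp add: continuous_on_open_vimage open_discrete)

lemma continuous_flip: "continuous_on UNIV (flip F)"
  unfolding flip_def
proof (intro continuous_on_coordinatewise_then_product)
  fix i
  show "continuous_on UNIV (\<lambda>x. if i \<in> F then \<not> x i else x i)"
  proof (cases "i \<in> F")
    case True
    have "continuous_on UNIV (Not \<circ> (\<lambda>x::nat\<Rightarrow>bool. x i))"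
      by (rule continuous_on_compose) (auto intro: continuous_on_subset[OF continuous_Not])
    then show ?thesis using True by (simp add: o_def)
  qed simp
qed

lemma flip_image_vimage: "flip F ` A = flip F -` A"
proof (rule set_eqI)
  fix y
  show "y \<in> flip F ` A \<longleftrightarrow> y \<in> flip F -` A"
  proof
    assume "y \<in> flip F ` A"
    then obtain a where "a \<in> A" "y = flip F a" by blast
    then show "y \<in> flip F -` A" by simp
  next
    assume "y \<in> flip F -` A"
    then have "flip F (flip F y) \<in> flip F ` A" by blast
    then show "y \<in> flip F ` A" by simp
  qed
qed

lemma meagr_flip:
  assumes "meagr A" shows "meagr (flip F ` A)"
proof -
  from assms obtain C :: "nat \<Rightarrow> (nat \<Rightarrow> bool) set" where C: "\<And>i. closed (C i) \<and> interior (C i) = {}" "A \<subseteq> \<Union>(range C)"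
    unfolding meagr_def by blast
  have "closed (flip F ` C i)" for i
    unfolding flip_image_vimage
    by (rule closed_vimage[OF _ continuous_flip]) (simp add: C(1))
  moreover have "interior (flip F ` C i) = {}" for i
  proof -
    let ?W = "flip F -` interior (flip F ` C i)"
    have oW: "open ?W"
      by (rule open_vimage[OF open_interior continuous_flip])
    have sW: "?W \<subseteq> C i"
    proof
      fix y assume "y \<in> ?W"
      then have "flip F y \<in> flip F ` C i" using interior_subset by blast
      then have "flip F y \<in> flip F -` C i" by (simp only: flip_image_vimage)
      then show "y \<in> C i" by simp
    qed
    have "?W \<subseteq> interior (C i)" by (rule interior_maximal[OF sW oW])
    then have e: "?W = {}" using C(1)[of i] by simp
    show ?thesis
    proof (rule equals0I)
      fix y assume "y \<in> interior (flip F ` C i)"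
      then have "flip F (flip F y) \<in> interior (flip F ` C i)" by simp
      then have "flip F y \<in> ?W" by (simp only: vimage_eq)
      then show False using e by simp
    qed
  qed
  moreover have "flip F ` A \<subseteq> \<Union>(range (\<lambda>i. flip F ` C i))" using C(2) by blast
  ultimately show ?thesis unfolding meagr_def
    by (intro exI[of _ "\<lambda>i. flip F ` C i"]) simp
qed

definition bp :: "(nat \<Rightarrow> bool) set \<Rightarrow> bool" where
  "bp A \<longleftrightarrow> (\<exists>U. open U \<and> meagr ((A - U) \<union> (U - A)))"

lemma borel_bp:
  assumes "A \<in> sets borel" shows "bp A"
proof -
  have "A \<in> sigma_sets UNIV {S. open S}" using assms by (simp add: sets_borel)
  then show ?thesis
  proof induction
    case (Basic a)
    then show ?case unfolding bp_def meagr_def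
      by (intro exI[of _ a]) (auto intro!: exI[of _ "\<lambda>_. {}"])
  next
    case Empty
    then show ?case unfolding bp_def meagr_def
      by (intro exI[of _ "{}"]) (auto intro!: exI[of _ "\<lambda>_. {}"])
  next
    case (Compl a)
    then obtain U where U: "open U" "meagr ((a - U) \<union> (U - a))" unfolding bp_def by blast
    have "((UNIV - a) - (- closure U)) \<union> ((- closure U) - (UNIV - a))
          \<subseteq> ((a - U) \<union> (U - a)) \<union> (closure U - U)"
      using closure_subset by blast
    moreover have "meagr (((a - U) \<union> (U - a)) \<union> (closure U - U))"
      using U meagr_Un meagr_frontier by blast
    ultimately show ?case unfolding bp_def
      by (intro exI[of _ "- closure U"]) (auto intro: meagr_subset)
  next
    case (Union a)
    then obtain U where U: "\<And>i. open (U i) \<and> meagr ((a i - U i) \<union> (U i - a i))"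
      unfolding bp_def by metis
    have "(\<Union>(range a) - \<Union>(range U)) \<union> (\<Union>(range U) - \<Union>(range a))
          \<subseteq> \<Union>(range (\<lambda>i. (a i - U i) \<union> (U i - a i)))" by blast
    moreover have "meagr (\<Union>(range (\<lambda>i. (a i - U i) \<union> (U i - a i))))"
      by (rule meagr_Union) (simp add: U)
    ultimately show ?case unfolding bp_def
      by (intro exI[of _ "\<Union>(range U)"]) (auto intro: meagr_subset simp: U)
  qed
qed

lemma flip_diff: "flip {k. x k \<noteq> t k} t = x"
  by (rule ext) (simp add: flip_def)

lemma cover_lemma:
  assumes "\<forall>X \<in> UNIV // hamming_rel. T \<inter> X \<noteq> {}"
  shows "x \<in> \<Union>((\<lambda>F. flip F ` T) ` Collect finite)"
proof -
  have "hamming_rel `` {x} \<in> UNIV // hamming_rel" by (rule quotientI) (rule UNIV_I)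
  then have "T \<inter> hamming_rel `` {x} \<noteq> {}" by (rule bspec[OF assms])
  then obtain t where t: "t \<in> T" "(x, t) \<in> hamming_rel" by (auto simp del: Image_singleton_iff simp add: Image_singleton)
  then have fin: "finite {k. x k \<noteq> t k}" by (simp add: hamming_rel_def hamming_equiv_def)
  have "x \<in> flip {k. x k \<noteq> t k} ` T" by (rule image_eqI[where f="flip {k. x k \<noteq> t k}", OF flip_diff[of x t, symmetric] t(1)])
  then show ?thesis using fin by blast
qed

lemma thin_flip:
  assumes "thin T" "z \<in> T" shows "flip {n} z \<notin> T"
proof
  assume ft: "flip {n} z \<in> T"
  have "restrict (flip {n} z) (UNIV - {n}) = restrict z (UNIV - {n})"
    by (rule ext) (simp add: restrict_def flip_def)
  moreover have "inj_on (\<lambda>x. restrict x (UNIV - {n})) T" using assms(1) unfolding thin_def by simp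
  ultimately have "flip {n} z = z" using ft assms(2) by (simp add: inj_on_def)
  then have "flip {n} z n = z n" by simp
  then show False by (simp add: flip_def)
qed

theorem theorem9:
  fixes T :: "(nat \<Rightarrow> bool) set"
  assumes "thin T"
    and "\<forall>X \<in> UNIV // hamming_rel. T \<inter> X \<noteq> {}"
  shows "T \<notin> sets borel"
proof
  assume "T \<in> sets borel"
  then have "bp T" by (rule borel_bp)
  then obtain U where U: "open U" "meagr ((T - U) \<union> (U - T))"
    unfolding bp_def by blast
  define M where "M = (T - U) \<union> (U - T)"
  have M: "meagr M" using U(2) unfolding M_def .
  show False
  proof (cases "U = {}")
    case True
    then have mT: "meagr T" using M unfolding M_def by simp
    have cover: "UNIV \<subseteq> \<Union>((\<lambda>F. flip F ` T) ` Collect finite)"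
      using cover_lemma[OF assms(2)] by blast
    have "countable ((\<lambda>F. flip F ` T) ` Collect (finite :: nat set \<Rightarrow> bool))"
      by (rule countable_image) (rule countable_Collect_finite)
    moreover have "\<And>B. B \<in> (\<lambda>F. flip F ` T) ` Collect finite \<Longrightarrow> meagr B"
    proof -
      fix B assume "B \<in> (\<lambda>F. flip F ` T) ` Collect (finite :: nat set \<Rightarrow> bool)"
      then obtain F where "B = flip F ` T" by blast
      then show "meagr B" using meagr_flip[OF mT] by simp
    qed
    ultimately have "meagr (\<Union>((\<lambda>F. flip F ` T) ` Collect finite))"
      by (rule meagr_countable_Union)
    then have "meagr UNIV" using cover by (rule meagr_subset)
    then show False using not_meagr_open[of UNIV] by simp
  next
    case False
    then obtain x where x: "x \<in> U" by blast
    have "openin (product_topology (\<lambda>i. euclidean) UNIV) U"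
      using U(1) by (simp add: euclidean_product_topology)
    then have "\<forall>x\<in>U. \<exists>V. finite {i. V i \<noteq> (UNIV::bool set)} \<and> x \<in> Pi\<^sub>E UNIV V \<and> Pi\<^sub>E UNIV V \<subseteq> U"
      unfolding openin_product_topology_alt by simp meson
    then obtain V where V: "finite {i. V i \<noteq> (UNIV::bool set)}" "x \<in> Pi\<^sub>E UNIV V" "Pi\<^sub>E UNIV V \<subseteq> U"
      using x by blast
    obtain n where "n \<notin> {i. V i \<noteq> (UNIV::bool set)}"
      using ex_new_if_finite[OF infinite_UNIV_nat V(1)] by blast
    then have n: "V n = UNIV" by simp
    have "flip {n} x \<in> Pi\<^sub>E UNIV V"
      using V(2) n unfolding PiE_iff by (simp add: flip_def)
    then have fx: "flip {n} x \<in> U" using V(3) by blast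
    define Z where "Z = U \<inter> flip {n} -` U"
    have oZ: "open Z" unfolding Z_def
      by (rule open_Int[OF U(1) open_vimage[OF U(1) continuous_flip]])
    have xZ: "x \<in> Z" using x fx by (simp add: Z_def)
    have "Z \<subseteq> M \<union> flip {n} ` M"
    proof
      fix z assume z: "z \<in> Z"
      show "z \<in> M \<union> flip {n} ` M"
      proof (cases "z \<in> T")
        case False
        have "z \<in> U" using z by (simp add: Z_def)
        then have "z \<in> M" using False by (simp add: M_def)
        then show ?thesis by simp
      next
        case True
        have "flip {n} z \<notin> T" by (rule thin_flip[OF assms(1) True])
        moreover have "flip {n} z \<in> U" using z by (simp add: Z_def)
        ultimately have "flip {n} z \<in> M" by (simp add: M_def)
        then have "flip {n} (flip {n} z) \<in> flip {n} ` M" by (rule imageI)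
        then show ?thesis by simp
      qed
    qed
    moreover have "meagr (M \<union> flip {n} ` M)" by (rule meagr_Un[OF M meagr_flip[OF M]])
    ultimately have "meagr Z" by (rule meagr_subset[rotated])
    then show False using not_meagr_open[OF oZ] xZ by blast
  qed
qed

end
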